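(* Let $A,B,\beta,\xi_0,\theta>0$. Let $v_{n,m}\colon[\xi_0,\infty)\to[0,\infty)$, for integers $n,m\ge0$, and let $w\colon[\xi_0,\infty)\to[0,\infty)$ be bounded. Suppose that for all $n,m\ge0$ and $\xi\ge\xi_0$: (1) $v_{n+1,m}(\xi)\le v_{n,m}(\xi)$; (2) $v_{n+N,m}(\xi)\le(1-A\xi^{-\beta})v_{n,m}(\xi)$ for all integers $N>B\log\xi$; (3) $v_{0,m}(\xi)\le\theta^{-m}w(\xi)$; (4) $w$ decays rapidly in $\xi$. Then for any $c>0$ the sequence $t_n=\sup\{v_{n,m}(\xi):\ \xi>\xi_0,\ m\in\mathbb Z_{\ge0},\ m<c\log n\}$ decays rapidly in $n$.
   Context: A function $w\colon D\subseteq(0,\infty)\to\mathbb R$ decays rapidly in $\xi$ if for each $\ell\ge1$ there is $C$ with $|w(\xi)|\le C\xi^{-\ell}$ for all $\xi\in D$. A sequence $\{t_n\}$ decays rapidly in $n$ if for each $\ell\ge1$ there is $C$ with $|t_n|\le Cn^{-\ell}$ for all $n\ge1$. *)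

theory Defs
  imports "HOL-Analysis.Analysis"
begin

definition decays_rapidly_on :: "real set \<Rightarrow> (real \<Rightarrow> real) \<Rightarrow> bool" where
  "decays_rapidly_on D w \<longleftrightarrow>
     (\<forall>l::nat. l \<ge> 1 \<longrightarrow> (\<exists>C. \<forall>\<xi>\<in>D. \<bar>w \<xi>\<bar> \<le> C * \<xi> powr (- real l)))"

definition seq_decays_rapidly :: "(nat \<Rightarrow> real) \<Rightarrow> bool" where
  "seq_decays_rapidly t \<longleftrightarrow>
     (\<forall>l::nat. l \<ge> 1 \<longrightarrow> (\<exists>C. \<forall>n::nat. n \<ge> 1 \<longrightarrow> \<bar>t n\<bar> \<le> C * real n powr (- real l)))"

end

theory Submission
  imports Defs "HOL-Real_Asymp.Real_Asymp"
begin

lemma nat_floor_le_max: "real (nat (floor x)) \<le> max 0 x"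
proof (cases "x \<ge> 0")
  case True then show ?thesis by simp
next
  case False then have "floor x < 0" by linarith
  then show ?thesis by simp
qed

theorem proposition7p5:
  fixes A B \<beta> \<xi>\<^sub>0 \<theta> c :: real
    and v :: "nat \<Rightarrow> nat \<Rightarrow> real \<Rightarrow> real"
    and w :: "real \<Rightarrow> real"
  assumes "A > 0" "B > 0" "\<beta> > 0" "\<xi>\<^sub>0 > 0" "\<theta> > 0"
    and v_nonneg: "\<And>n m \<xi>. \<xi> \<ge> \<xi>\<^sub>0 \<Longrightarrow> v n m \<xi> \<ge> 0"
    and w_nonneg: "\<And>\<xi>. \<xi> \<ge> \<xi>\<^sub>0 \<Longrightarrow> w \<xi> \<ge> 0"
    and w_bounded: "bounded (w ` {\<xi>\<^sub>0..})"
    and h1: "\<And>n m \<xi>. \<xi> \<ge> \<xi>\<^sub>0 \<Longrightarrow> v (n + 1) m \<xi> \<le> v n m \<xi>"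
    and h2: "\<And>n m \<xi> N. \<xi> \<ge> \<xi>\<^sub>0 \<Longrightarrow> real N > B * ln \<xi> \<Longrightarrow>
               v (n + N) m \<xi> \<le> (1 - A * \<xi> powr (- \<beta>)) * v n m \<xi>"
    and h3: "\<And>m \<xi>. \<xi> \<ge> \<xi>\<^sub>0 \<Longrightarrow> v 0 m \<xi> \<le> inverse \<theta> ^ m * w \<xi>"
    and h4: "decays_rapidly_on {\<xi>\<^sub>0..} w"
    and "c > 0"
  shows "seq_decays_rapidly
           (\<lambda>n. Sup {v n m \<xi> | m \<xi>. \<xi> > \<xi>\<^sub>0 \<and> real m < c * ln (real n)})"
proof -
  note A0 = \<open>A > 0\<close> and B0 = \<open>B > 0\<close> and be0 = \<open>\<beta> > 0\<close> and x0 = \<open>\<xi>\<^sub>0 > 0\<close>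
    and th0 = \<open>\<theta> > 0\<close> and c0 = \<open>c > 0\<close>
  have mono: "v b m \<xi> \<le> v a m \<xi>" if "a \<le> b" "\<xi> \<ge> \<xi>\<^sub>0" for a b m \<xi>
  proof -
    have "v (a + d) m \<xi> \<le> v a m \<xi>" for d
    proof (induction d)
      case 0 then show ?case by simp
    next
      case (Suc d)
      have "v (a + Suc d) m \<xi> \<le> v (a + d) m \<xi>" using h1[OF that(2), of "a + d" m] by simp
      then show ?case using Suc by linarith
    qed
    from this[of "b - a"] that(1) show ?thesis by simp
  qed
  have iter: "v (k * N) m \<xi> \<le> (max 0 (1 - A * \<xi> powr (- \<beta>))) ^ k * v 0 m \<xi>"
    if "\<xi> \<ge> \<xi>\<^sub>0" "real N > B * ln \<xi>" for k N m \<xi>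
  proof (induction k)
    case 0 then show ?case by simp
  next
    case (Suc k)
    let ?q = "max 0 (1 - A * \<xi> powr (- \<beta>))"
    have "v (Suc k * N) m \<xi> = v (k * N + N) m \<xi>" by (simp add: add.commute)
    also have "\<dots> \<le> (1 - A * \<xi> powr (- \<beta>)) * v (k * N) m \<xi>" using h2[OF that] .
    also have "\<dots> \<le> ?q * v (k * N) m \<xi>"
      by (rule mult_right_mono) (auto intro: v_nonneg that)
    also have "\<dots> \<le> ?q * (?q ^ k * v 0 m \<xi>)"
      by (rule mult_left_mono[OF Suc]) simp
    finally show ?case by simp
  qed
  show ?thesis
    unfolding seq_decays_rapidly_def
  proof (intro allI impI)
    fix l :: nat assume "l \<ge> 1"
    define K where "K = c * \<bar>ln \<theta>\<bar>"
    define \<delta> where "\<delta> = 1 / (2 * \<beta>)"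
    define L where "L = real l + K"
    define j where "j = nat (ceiling (L / \<delta>)) + 1"
    define D where "D = B * \<delta>"
    have K0: "K \<ge> 0" unfolding K_def using c0 by simp
    have d0: "\<delta> > 0" unfolding \<delta>_def using be0 by simp
    have D0: "D > 0" unfolding D_def using B0 d0 by simp
    have "j \<ge> 1" unfolding j_def by simp
    then obtain Cj where Cj: "\<forall>\<xi>\<in>{\<xi>\<^sub>0..}. \<bar>w \<xi>\<bar> \<le> Cj * \<xi> powr (- real j)"
      using h4 unfolding decays_rapidly_on_def by blast
    obtain W where W: "\<forall>\<xi>\<in>{\<xi>\<^sub>0..}. w \<xi> \<le> W"
      using w_bounded unfolding bounded_iff by (metis abs_le_D1 real_norm_def image_eqI)
    define f where "f = (\<lambda>n::nat. real n powr (K + real l) * exp (-(A * sqrt (real n) / (D * ln (real n) + 1))))"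
    have "f \<longlonglongrightarrow> 0" unfolding f_def using A0 D0 by real_asymp
    then have "Bseq f" using convergent_imp_Bseq convergentI by blast
    then obtain M where M0: "M > 0" and M: "\<And>n. norm (f n) \<le> M" by (metis BseqE)
    define C0 where "C0 = max (max Cj (W * exp A * M)) \<bar>Sup ({}::real set)\<bar>"
    have key: "v n m \<xi> \<le> C0 * real n powr (- real l)"
      if n1: "n \<ge> 1" and xi: "\<xi> > \<xi>\<^sub>0" and mn: "real m < c * ln (real n)" for n m \<xi>
    proof -
      have xi': "\<xi> \<ge> \<xi>\<^sub>0" "\<xi> > 0" using xi x0 by auto
      have "0 < c * ln (real n)" using mn by (meson le_less_trans of_nat_0_le_iff)
      then have lnn: "ln (real n) > 0" using c0 by (simp add: zero_less_mult_iff)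
      then have n1': "real n > 1" using ln_le_zero_iff[of "real n"] n1 by force
      have v0: "v n m \<xi> \<le> v 0 m \<xi>" using mono[OF _ xi'(1)] by simp
      have "inverse \<theta> ^ m = exp (real m * (- ln \<theta>))"
        using th0 by (simp add: exp_of_nat_mult ln_inverse[symmetric])
      also have "\<dots> \<le> exp (c * ln (real n) * \<bar>ln \<theta>\<bar>)"
      proof (rule exp_mono)
        have "real m * (- ln \<theta>) \<le> real m * \<bar>ln \<theta>\<bar>" by (rule mult_left_mono) auto
        also have "\<dots> \<le> c * ln (real n) * \<bar>ln \<theta>\<bar>" using mn by (intro mult_right_mono) auto
        finally show "real m * (- ln \<theta>) \<le> c * ln (real n) * \<bar>ln \<theta>\<bar>" .
      qed
      also have "\<dots> = real n powr K" unfolding K_def powr_def using n1' by (simp add: algebra_simps)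
      finally have thK: "inverse \<theta> ^ m \<le> real n powr K" .
      have vw: "v 0 m \<xi> \<le> real n powr K * w \<xi>"
        using h3[OF xi'(1), of m] mult_right_mono[OF thK w_nonneg[OF xi'(1)]] by linarith
      have wW1: "w \<xi> \<le> W" using W xi'(1) by auto
      have wW: "w \<xi> \<le> W" "0 \<le> W" using wW1 w_nonneg[OF xi'(1)] by auto
      show ?thesis
      proof (cases "\<xi> \<ge> real n powr \<delta>")
        case True
        have "\<bar>w \<xi>\<bar> \<le> Cj * \<xi> powr (- real j)" using Cj xi'(1) by simp
        then have Cjx: "w \<xi> \<le> Cj * \<xi> powr (- real j)" by linarith
        have "0 \<le> Cj * \<xi> powr (- real j)" using Cjx w_nonneg[OF xi'(1)] by linarith
        then have Cj0: "Cj \<ge> 0" using xi'(2) by (simp add: zero_le_mult_iff)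
        have "\<xi> powr (- real j) \<le> (real n powr \<delta>) powr (- real j)"
          by (rule powr_mono2') (use True n1' in auto)
        also have "\<dots> = real n powr (- (\<delta> * real j))" by (simp add: powr_powr)
        also have "\<dots> \<le> real n powr (- L)"
        proof (rule powr_mono)
          have "L / \<delta> \<le> real j" unfolding j_def by linarith
          then have "L \<le> \<delta> * real j" using d0 by (simp add: field_simps)
          then show "- (\<delta> * real j) \<le> - L" by simp
        qed (use n1' in simp)
        finally have "Cj * \<xi> powr (- real j) \<le> Cj * real n powr (- L)" using Cj0 by (rule mult_left_mono)
        then have wC: "w \<xi> \<le> Cj * real n powr (- L)" using Cjx by linarith
        have "v n m \<xi> \<le> real n powr K * (Cj * real n powr (- L))"
          using v0 vw mult_left_mono[OF wC powr_ge_zero[of "real n" K]] by linarith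
        also have "\<dots> = Cj * real n powr (- real l)"
          unfolding L_def by (simp add: powr_add[symmetric] algebra_simps)
        also have "\<dots> \<le> C0 * real n powr (- real l)"
          by (rule mult_right_mono) (auto simp: C0_def)
        finally show ?thesis .
      next
        case False
        define N where "N = nat (floor (B * ln \<xi>)) + 1"
        define q where "q = max 0 (1 - A * \<xi> powr (- \<beta>))"
        define k where "k = n div N"
        have NB: "real N > B * ln \<xi>" unfolding N_def by linarith
        have lnxi: "ln \<xi> < \<delta> * ln (real n)"
        proof -
          have "ln \<xi> < ln (real n powr \<delta>)" using False xi'(2) n1' by (subst ln_less_cancel_iff) auto
          then show ?thesis using n1' by (simp add: ln_powr)
        qed
        have "B * ln \<xi> \<le> D * ln (real n)" unfolding D_def
          using mult_left_mono[OF less_imp_le[OF lnxi], of B] B0 by (simp add: mult.assoc)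
        moreover have "0 \<le> D * ln (real n)" using D0 lnn by simp
        moreover have "real (nat (floor (B * ln \<xi>))) \<le> max 0 (B * ln \<xi>)" by (rule nat_floor_le_max)
        ultimately have ND: "real N \<le> D * ln (real n) + 1" unfolding N_def by simp
        have N0: "real N > 0" unfolding N_def by simp
        have q0: "q \<ge> 0" unfolding q_def by simp
        have "v n m \<xi> \<le> v (k * N) m \<xi>" using mono[OF _ xi'(1)] unfolding k_def
          by simp
        also have "\<dots> \<le> q ^ k * v 0 m \<xi>" unfolding q_def using iter[OF xi'(1) NB] .
        also have "\<dots> \<le> q ^ k * (real n powr K * W)"
          using vw mult_right_mono[OF wW(1) powr_ge_zero[of "real n" K]] q0
          by (intro mult_left_mono) (auto simp: mult.commute)
        finally have v1: "v n m \<xi> \<le> q ^ k * (real n powr K * W)" .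
        have qe: "q \<le> exp (- (A * \<xi> powr (- \<beta>)))" unfolding q_def
          using exp_ge_add_one_self[of "- (A * \<xi> powr (- \<beta>))"] by auto
        have "q ^ k \<le> exp (- (A * \<xi> powr (- \<beta>))) ^ k" by (rule power_mono[OF qe q0])
        also have "\<dots> = exp (- (real k * (A * \<xi> powr (- \<beta>))))"
          by (simp add: exp_of_nat_mult[symmetric])
        also have "\<dots> \<le> exp (A - A * sqrt (real n) / (D * ln (real n) + 1))"
        proof (rule exp_mono)
          have xb: "\<xi> powr (- \<beta>) \<ge> real n powr (- 1 / 2)"
          proof -
            have "\<xi> powr (- \<beta>) \<ge> (real n powr \<delta>) powr (- \<beta>)"
              by (rule powr_mono2') (use False xi'(2) be0 in auto)
            also have "(real n powr \<delta>) powr (- \<beta>) = real n powr (- 1 / 2)"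
              unfolding \<delta>_def using be0 by (simp add: powr_powr)
            finally show ?thesis .
          qed
          have kN: "real k \<ge> real n / real N - 1"
          proof -
            have Npos: "N > 0" unfolding N_def by simp
            have "n = k * N + n mod N" unfolding k_def by simp
            moreover have "n mod N < N" using Npos by simp
            ultimately have "n < k * N + N" by linarith
            then have "real n < real (k * N + N)" by (simp only: of_nat_less_iff)
            then have "real n < (real k + 1) * real N" by (simp add: algebra_simps)
            then have "real n / real N < real k + 1" using N0 by (simp add: divide_less_eq)
            then show ?thesis by simp
          qed
          have p0: "real n powr (- 1 / 2) > 0" using n1' by simp
          have "real k * (A * \<xi> powr (- \<beta>)) \<ge> real k * (A * real n powr (- 1 / 2))"
            using xb A0 by (simp add: mult_left_mono)
          moreover have "real k * (A * real n powr (- 1 / 2)) \<ge> (real n / real N - 1) * (A * real n powr (- 1 / 2))"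
            using kN A0 p0 by (simp add: mult_right_mono)
          moreover have "real n / real N \<ge> real n / (D * ln (real n) + 1)"
            using ND N0 n1' by (simp add: frac_le)
          then have "(real n / real N - 1) * (A * real n powr (- 1 / 2)) \<ge> (real n / (D * ln (real n) + 1) - 1) * (A * real n powr (- 1 / 2))"
            using A0 p0 by (simp add: mult_right_mono)
          moreover have "(real n / (D * ln (real n) + 1) - 1) * (A * real n powr (- 1 / 2))
              = A * (real n * real n powr (- 1 / 2)) / (D * ln (real n) + 1) - A * real n powr (- 1 / 2)"
            by (simp add: field_simps)
          moreover have "real n * real n powr (- 1 / 2) = sqrt (real n)"
          proof -
            have "real n * real n powr (- 1 / 2) = real n powr 1 * real n powr (- 1 / 2)"
              using n1' by simp
            also have "\<dots> = real n powr (1 + (- 1 / 2))" by (rule powr_add[symmetric])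
            also have "\<dots> = sqrt (real n)" using n1' by (simp add: powr_half_sqrt)
            finally show ?thesis .
          qed
          then have "A * (real n * real n powr (- 1 / 2)) / (D * ln (real n) + 1) = A * sqrt (real n) / (D * ln (real n) + 1)"
            by simp
          moreover have "real n powr (- 1 / 2) \<le> 1" using powr_mono[of "- 1 / 2" 0 "real n"] n1' by simp
          then have "A * real n powr (- 1 / 2) \<le> A" using A0 mult_left_mono[of _ 1 A] by simp
          ultimately show "- (real k * (A * \<xi> powr (- \<beta>))) \<le> A - A * sqrt (real n) / (D * ln (real n) + 1)"
            by linarith
        qed
        also have "\<dots> = exp A * exp (-(A * sqrt (real n) / (D * ln (real n) + 1)))"
          by (simp add: exp_add[symmetric])
        finally have qk: "q ^ k \<le> exp A * exp (-(A * sqrt (real n) / (D * ln (real n) + 1)))" .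
        have fM: "f n \<le> M" using M[of n] by simp
        have "real n powr K * exp (-(A * sqrt (real n) / (D * ln (real n) + 1)))
              = f n * real n powr (- real l)"
          unfolding f_def using n1' by (simp add: powr_add[symmetric] algebra_simps)
        also have "\<dots> \<le> M * real n powr (- real l)" using fM by (simp add: mult_right_mono)
        finally have E: "real n powr K * exp (-(A * sqrt (real n) / (D * ln (real n) + 1))) \<le> M * real n powr (- real l)" .
        have "v n m \<xi> \<le> exp A * exp (-(A * sqrt (real n) / (D * ln (real n) + 1))) * (real n powr K * W)"
          using v1 mult_right_mono[OF qk mult_nonneg_nonneg[OF powr_ge_zero[of "real n" K] wW(2)]] by linarith
        also have "\<dots> = exp A * W * (real n powr K * exp (-(A * sqrt (real n) / (D * ln (real n) + 1))))"
          by (simp add: algebra_simps)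
        also have "\<dots> \<le> exp A * W * (M * real n powr (- real l))"
          using E wW by (simp add: mult_left_mono)
        also have "\<dots> = (W * exp A * M) * real n powr (- real l)" by (simp add: algebra_simps)
        also have "\<dots> \<le> C0 * real n powr (- real l)"
          by (rule mult_right_mono) (auto simp: C0_def)
        finally show ?thesis .
      qed
    qed
    show "\<exists>C. \<forall>n. 1 \<le> n \<longrightarrow> \<bar>Sup {v n m \<xi> | m \<xi>. \<xi> > \<xi>\<^sub>0 \<and> real m < c * ln (real n)}\<bar> \<le> C * real n powr (- real l)"
    proof (intro exI allI impI)
      fix n :: nat assume n1: "1 \<le> n"
      let ?S = "{v n m \<xi> | m \<xi>. \<xi> > \<xi>\<^sub>0 \<and> real m < c * ln (real n)}"
      show "\<bar>Sup ?S\<bar> \<le> C0 * real n powr (- real l)"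
      proof (cases "n = 1")
        case True
        then have "?S = {}" by simp
        then show ?thesis using True by (simp add: C0_def)
      next
        case False
        then have n2: "real n > 1" using n1 by simp
        have ub: "\<And>x. x \<in> ?S \<Longrightarrow> x \<le> C0 * real n powr (- real l)" using key n1 by blast
        have lp: "0 < c * ln (real n)" using n2 c0 by simp
        have "v n 0 (\<xi>\<^sub>0 + 1) = v n 0 (\<xi>\<^sub>0 + 1) \<and> \<xi>\<^sub>0 < \<xi>\<^sub>0 + 1 \<and> real (0::nat) < c * ln (real n)"
          using lp by simp
        then have mem: "v n 0 (\<xi>\<^sub>0 + 1) \<in> ?S" by blast
        have ne: "?S \<noteq> {}" using mem by blast
        have "v n 0 (\<xi>\<^sub>0 + 1) \<le> Sup ?S"
          by (rule cSup_upper[OF mem]) (use ub in \<open>auto simp: bdd_above_def\<close>)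
        moreover have "0 \<le> v n 0 (\<xi>\<^sub>0 + 1)" by (rule v_nonneg) simp
        moreover have "Sup ?S \<le> C0 * real n powr (- real l)" by (rule cSup_least[OF ne ub])
        ultimately show ?thesis by simp
      qed
    qed
  qed
qed

end
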